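(* There is a positive absolute constant $C_0$ such that for every $n\geq 2$, every domain $D$ in $\mathbb{R}^n$ such that $\mathbb{R}^n\setminus D$ contains at least two points, and all $z,w\in D$, $$d''_D(z,w)\leq d'_D(z,w)\leq d_D(z,w)\leq C_0\, d''_D(z,w).$$
   Context: Write $d(z,\partial D)=\inf\{|z-a|:a\in\partial D\}$ and $Q(z;a,b)=|z-a|\big(1+\big|\log\frac{|a-b|}{|z-a|}\big|\big)$ (equal to $+\infty$ when $a=b$). For $z\in D$ define $1/\lambda_D(z)=\inf\{Q(z;a,b): a,b\in\mathbb{R}^n\setminus D\}$, $1/\lambda'_D(z)=\inf\{Q(z;a,b): a,b\in\partial D\}$, $1/\lambda''_D(z)=\inf\{Q(z;a,b): a,b\in\partial D,\ |z-a|=d(z,\partial D)\}$. For $z,w\in D$ set $d_D(z,w)=\inf_\gamma\int_\gamma\lambda_D(t)|dt|$, $d'_D(z,w)=\inf_\gamma\int_\gamma\lambda'_D(t)|dt|$, $d''_D(z,w)=\inf_\gamma\int_\gamma\lambda''_D(t)|dt|$, the infima over all rectifiable arcs $\gamma$ joining $z$ to $w$ in $D$. *)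

theory Defs
  imports "HOL-Analysis.Analysis"
begin

text \<open>Euclidean space R^n is represented, as in the library theory
Abstract_Euclidean_Space, by the points of type nat => real vanishing from
index n on, with the topology Euclidean_space n.\<close>

definition edist :: "nat \<Rightarrow> (nat \<Rightarrow> real) \<Rightarrow> (nat \<Rightarrow> real) \<Rightarrow> real" where
  "edist n x y = L2_set (\<lambda>i. x i - y i) {..<n}"

definition setdist_pt :: "nat \<Rightarrow> (nat \<Rightarrow> real) \<Rightarrow> (nat \<Rightarrow> real) set \<Rightarrow> real" where
  "setdist_pt n z A = Inf {edist n z a | a. a \<in> A}"

text \<open>Q(z;a,b) for a \<noteq> b (it is +infinity for a = b, so such pairs never matter
for the infima below, which range over sets with at least two points).\<close>
definition Qf :: "nat \<Rightarrow> (nat \<Rightarrow> real) \<Rightarrow> (nat \<Rightarrow> real) \<Rightarrow> (nat \<Rightarrow> real) \<Rightarrow> real" where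
  "Qf n z a b = edist n z a * (1 + \<bar>ln (edist n a b / edist n z a)\<bar>)"

definition bdry :: "nat \<Rightarrow> (nat \<Rightarrow> real) set \<Rightarrow> (nat \<Rightarrow> real) set" where
  "bdry n D = Euclidean_space n frontier_of D"

definition compl :: "nat \<Rightarrow> (nat \<Rightarrow> real) set \<Rightarrow> (nat \<Rightarrow> real) set" where
  "compl n D = topspace (Euclidean_space n) - D"

definition lam :: "nat \<Rightarrow> (nat \<Rightarrow> real) set \<Rightarrow> (nat \<Rightarrow> real) \<Rightarrow> real" where
  "lam n D z = 1 / Inf {Qf n z a b | a b. a \<in> compl n D \<and> b \<in> compl n D \<and> a \<noteq> b}"

definition lam' :: "nat \<Rightarrow> (nat \<Rightarrow> real) set \<Rightarrow> (nat \<Rightarrow> real) \<Rightarrow> real" where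
  "lam' n D z = 1 / Inf {Qf n z a b | a b. a \<in> bdry n D \<and> b \<in> bdry n D \<and> a \<noteq> b}"

definition lam'' :: "nat \<Rightarrow> (nat \<Rightarrow> real) set \<Rightarrow> (nat \<Rightarrow> real) \<Rightarrow> real" where
  "lam'' n D z = 1 / Inf {Qf n z a b | a b. a \<in> bdry n D \<and> b \<in> bdry n D \<and> a \<noteq> b
                                        \<and> edist n z a = setdist_pt n z (bdry n D)}"

definition plen :: "nat \<Rightarrow> (real \<Rightarrow> nat \<Rightarrow> real) \<Rightarrow> real \<Rightarrow> real \<Rightarrow> ennreal" where
  "plen n g s t = (SUP ts \<in> {ts. sorted ts \<and> set ts \<subseteq> {s..t}}.
      ennreal (\<Sum>i<length ts - 1. edist n (g (ts ! i)) (g (ts ! Suc i))))"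

definition rectifiable :: "nat \<Rightarrow> (real \<Rightarrow> nat \<Rightarrow> real) \<Rightarrow> bool" where
  "rectifiable n g \<longleftrightarrow> plen n g 0 1 < \<infinity>"

definition arclen :: "nat \<Rightarrow> (real \<Rightarrow> nat \<Rightarrow> real) \<Rightarrow> real \<Rightarrow> real" where
  "arclen n g t = enn2real (plen n g 0 (max 0 (min 1 t)))"

text \<open>Line integral with respect to arc length: the integral of rho(g t) with
respect to the Lebesgue-Stieltjes measure of the arc-length function.\<close>
definition line_int :: "nat \<Rightarrow> ((nat \<Rightarrow> real) \<Rightarrow> real) \<Rightarrow> (real \<Rightarrow> nat \<Rightarrow> real) \<Rightarrow> ennreal" where
  "line_int n \<rho> g = (\<integral>\<^sup>+ t. ennreal (\<rho> (g t)) * indicator {0..1} t \<partial>interval_measure (arclen n g))"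

definition joins :: "nat \<Rightarrow> (nat \<Rightarrow> real) set \<Rightarrow> (nat \<Rightarrow> real) \<Rightarrow> (nat \<Rightarrow> real) \<Rightarrow> (real \<Rightarrow> nat \<Rightarrow> real) set" where
  "joins n D z w = {g. pathin (Euclidean_space n) g \<and> g ` {0..1} \<subseteq> D \<and> g 0 = z \<and> g 1 = w
                       \<and> rectifiable n g}"

definition dist_rho :: "nat \<Rightarrow> (nat \<Rightarrow> real) set \<Rightarrow> ((nat \<Rightarrow> real) \<Rightarrow> real) \<Rightarrow> (nat \<Rightarrow> real) \<Rightarrow> (nat \<Rightarrow> real) \<Rightarrow> ennreal" where
  "dist_rho n D \<rho> z w = (INF g \<in> joins n D z w. line_int n \<rho> g)"

definition domain_in :: "nat \<Rightarrow> (nat \<Rightarrow> real) set \<Rightarrow> bool" where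
  "domain_in n D \<longleftrightarrow> openin (Euclidean_space n) D \<and> connectedin (Euclidean_space n) D \<and> D \<noteq> {}"

end

theory Submission
  imports Defs
begin

abbreviation "TS n \<equiv> topspace (Euclidean_space n)"

lemma edist_nonneg[simp]: "0 \<le> edist n x y" by (simp add: edist_def)
lemma edist_sym: "edist n x y = edist n y x"
  unfolding edist_def L2_set_def by (simp add: power2_commute)
lemma edist_refl[simp]: "edist n x x = 0" unfolding edist_def by (simp add: L2_set_0')
lemma edist_triangle: "edist n x z \<le> edist n x y + edist n y z"
proof -
  have "L2_set (\<lambda>i. (x i - y i) + (y i - z i)) {..<n} \<le> L2_set (\<lambda>i. x i - y i) {..<n} + L2_set (\<lambda>i. y i - z i) {..<n}"
    by (rule L2_set_triangle_ineq)
  thus ?thesis by (simp add: edist_def)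
qed
lemma edist_coord: "i < n \<Longrightarrow> \<bar>x i - y i\<bar> \<le> edist n x y"
proof -
  assume "i < n"
  have "(x i - y i)^2 \<le> (\<Sum>j<n. (x j - y j)^2)"
    by (rule member_le_sum) (use \<open>i<n\<close> in auto)
  hence "sqrt ((x i - y i)^2) \<le> sqrt (\<Sum>j<n. (x j - y j)^2)" by (rule real_sqrt_le_mono)
  thus ?thesis by (simp add: edist_def L2_set_def)
qed
lemma edist_eq0: "x \<in> TS n \<Longrightarrow> y \<in> TS n \<Longrightarrow> edist n x y = 0 \<Longrightarrow> x = y"
proof -
  assume x: "x \<in> TS n" and y: "y \<in> TS n" and e: "edist n x y = 0"
  have "\<forall>i\<in>{..<n}. x i - y i = 0" using e unfolding edist_def by (subst (asm) L2_set_eq_0_iff) auto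
  moreover have "\<forall>i\<ge>n. x i = 0 \<and> y i = 0" using x y by (auto simp: topspace_Euclidean_space)
  ultimately show "x = y" by (intro ext) (metis lessThan_iff not_le eq_iff_diff_eq_0)
qed
lemma edist_pos: "x \<in> TS n \<Longrightarrow> y \<in> TS n \<Longrightarrow> x \<noteq> y \<Longrightarrow> 0 < edist n x y"
  using edist_eq0 edist_nonneg by (metis order_le_less)

lemma cont_path:
  assumes "\<And>i. continuous_on {0..1} (\<lambda>t. g t i)" "\<And>t. t \<in> {0..1} \<Longrightarrow> g t \<in> TS n"
  shows "continuous_map (top_of_set {0..1::real}) (Euclidean_space n) g"
proof -
  have "continuous_map (top_of_set {0..1}) (powertop_real UNIV) g"
    by (auto simp: continuous_map_componentwise_UNIV assms(1))
  moreover have "g ` {0..1} \<subseteq> {x. \<forall>i\<ge>n. x i = 0}"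
    using assms(2) by (auto simp: topspace_Euclidean_space)
  ultimately show ?thesis unfolding Euclidean_space_def continuous_map_in_subtopology by (auto simp: image_subset_iff)
qed

lemma path_hits:
  assumes "continuous_map (top_of_set {0..1::real}) (Euclidean_space n) g"
    "g 0 \<in> D" "g 1 \<notin> D"
  shows "\<exists>t\<in>{0..1}. g t \<in> Euclidean_space n frontier_of D"
proof -
  have "connectedin (Euclidean_space n) (g ` {0..1})"
    using connectedin_continuous_map_image[OF assms(1)] by (simp add: connectedin_topspace connected_Icc)
  moreover have "g ` {0..1} \<inter> D \<noteq> {}" using assms(2) by force
  moreover have "g 1 \<in> g ` {0..1}" by simp
  hence "g ` {0..1} - D \<noteq> {}" using assms(3) by blast
  ultimately show ?thesis using connectedin_Int_frontier_of by blast
qed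

lemma edist_cont: "continuous_map (Euclidean_space n) euclideanreal (\<lambda>x. edist n z x)"
proof -
  have "continuous_map (powertop_real UNIV) euclideanreal (\<lambda>x. sqrt (\<Sum>i<n. (z i - x i)^2))"
    by (intro continuous_intros continuous_map_product_projection) auto
  thus ?thesis unfolding Euclidean_space_def edist_def L2_set_def
    by (rule continuous_map_from_subtopology)
qed


lemma nearest:
  assumes F: "closedin (Euclidean_space n) F" and b0: "b0 \<in> F" and z: "z \<in> TS n"
  shows "\<exists>a\<in>F. \<forall>b\<in>F. edist n z a \<le> edist n z b"
proof -
  define R where "R = edist n z b0"
  define S where "S = (\<lambda>i. if i < n then {z i - R .. z i + R} else {0::real})"
  have "compactin euclideanreal (S i)" for i by (simp add: S_def)
  hence "compactin (powertop_real UNIV) (PiE UNIV S)"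
    by (simp add: compactin_PiE)
  moreover have "PiE UNIV S \<subseteq> TS n"
  proof
    fix x assume "x \<in> PiE UNIV S"
    hence "x i \<in> S i" for i by (simp add: PiE_iff)
    thus "x \<in> TS n" unfolding topspace_Euclidean_space
    proof (intro CollectI allI impI)
      fix i assume "n \<le> i" "\<And>i. x i \<in> S i"
      thus "x i = 0" using \<open>x i \<in> S i\<close> by (simp add: S_def)
    qed
  qed
  ultimately have "compactin (Euclidean_space n) (PiE UNIV S)"
    unfolding Euclidean_space_def compactin_subtopology by (simp add: topspace_Euclidean_space)
  hence cK: "compactin (Euclidean_space n) (F \<inter> PiE UNIV S)"
    using F closed_Int_compactin by blast
  have b0S: "b0 \<in> PiE UNIV S"
  proof -
    have "b0 \<in> TS n" using F b0 closedin_subset by blast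
    have "b0 i \<in> S i" for i
    proof (cases "i < n")
      case True thus ?thesis using edist_coord[OF True, of z b0] by (simp add: S_def R_def abs_le_iff)
    next
      case False thus ?thesis using \<open>b0 \<in> TS n\<close> by (simp add: S_def topspace_Euclidean_space)
    qed
    thus ?thesis by (simp add: PiE_iff)
  qed
  have "compactin euclideanreal (edist n z ` (F \<inter> PiE UNIV S))"
    by (rule image_compactin[OF cK edist_cont])
  hence "compact (edist n z ` (F \<inter> PiE UNIV S))" by simp
  moreover have "edist n z ` (F \<inter> PiE UNIV S) \<noteq> {}" using b0 b0S by blast
  ultimately obtain a where a: "a \<in> F \<inter> PiE UNIV S" and amin: "\<forall>b\<in>F \<inter> PiE UNIV S. edist n z a \<le> edist n z b"
  proof -
    assume r: "\<And>a. a \<in> F \<inter> PiE UNIV S \<Longrightarrow> \<forall>b\<in>F \<inter> PiE UNIV S. edist n z a \<le> edist n z b \<Longrightarrow> thesis"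
    assume "compact (edist n z ` (F \<inter> PiE UNIV S))" "edist n z ` (F \<inter> PiE UNIV S) \<noteq> {}"
    from compact_attains_inf[OF this] obtain m where "m \<in> edist n z ` (F \<inter> PiE UNIV S)"
      "\<forall>y\<in>edist n z ` (F \<inter> PiE UNIV S). m \<le> y" by blast
    thus thesis using r by blast
  qed
  have "edist n z a \<le> R" using amin b0 b0S by (simp add: R_def)
  have "edist n z a \<le> edist n z b" if b: "b \<in> F" for b
  proof (cases "b \<in> PiE UNIV S")
    case True thus ?thesis using amin b by blast
  next
    case False
    have bT: "b \<in> TS n" using F b closedin_subset by blast
    from False obtain i where "b i \<notin> S i" by (auto simp: PiE_def Pi_def)
    hence "i < n" and "\<bar>z i - b i\<bar> > R" using bT by (auto simp: S_def topspace_Euclidean_space split: if_splits)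
    hence "edist n z b > R" using edist_coord[of i n z b] by linarith
    thus ?thesis using \<open>edist n z a \<le> R\<close> by linarith
  qed
  thus ?thesis using a by blast
qed

lemma seg_hits:
  assumes z: "z \<in> D" "z \<in> TS n" and a: "a \<in> TS n" "a \<notin> D"
  shows "\<exists>q\<in>Euclidean_space n frontier_of D. edist n z q \<le> edist n z a"
proof -
  define g where "g = (\<lambda>t::real. \<lambda>i. z i + t * (a i - z i))"
  have gT: "g t \<in> TS n" for t using z a by (auto simp: g_def topspace_Euclidean_space)
  have "continuous_map (top_of_set {0..1}) (Euclidean_space n) g"
  proof (rule cont_path)
    show "continuous_on {0..1} (\<lambda>t. g t i)" for i unfolding g_def by (intro continuous_intros)
  qed (rule gT)
  moreover have "g 0 = z" "g 1 = a" by (auto simp: g_def)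
  ultimately obtain t where t: "t \<in> {0..1}" "g t \<in> Euclidean_space n frontier_of D"
    using path_hits z a by metis
  have "edist n z (g t) = L2_set (\<lambda>i. t * (z i - a i)) {..<n}"
    by (simp add: edist_def g_def algebra_simps)
  also have "\<dots> = t * edist n z a" using t by (simp add: edist_def L2_set_right_distrib)
  also have "\<dots> \<le> edist n z a" using t by (simp add: mult_left_le_one_le)
  finally show ?thesis using t by blast
qed


lemma sum_sq_expand:
  fixes a b :: real
  shows "(\<Sum>i\<in>A. (a * x i + b * y i)^2) = a^2 * (\<Sum>i\<in>A. (x i)^2) + 2*a*b * (\<Sum>i\<in>A. x i * y i) + b^2 * (\<Sum>i\<in>A. (y i)^2)"
proof -
  have "\<And>i. (a*x i + b*y i)^2 = a^2*(x i)^2 + 2*a*b*(x i*y i) + b^2*(y i)^2"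
    by (simp add: power2_eq_square algebra_simps)
  thus ?thesis by (simp add: sum.distrib sum_distrib_left)
qed

lemma sum_01:
  fixes n :: nat
  assumes "2 \<le> n" "\<And>i. i \<noteq> 0 \<Longrightarrow> i \<noteq> 1 \<Longrightarrow> f i = 0"
  shows "(\<Sum>i<n. f i) = f 0 + (f 1 :: real)"
proof -
  have "(\<Sum>i<n. f i) = (\<Sum>i\<in>{0,1}. f i)"
    by (rule sum.mono_neutral_right) (use assms in auto)
  thus ?thesis by simp
qed

lemma perp_exists:
  fixes n :: nat and u :: "nat \<Rightarrow> real"
  assumes n: "2 \<le> n" and u: "(\<Sum>i<n. (u i)^2) = 1"
  shows "\<exists>w. (\<forall>i\<ge>n. w i = 0) \<and> (\<Sum>i<n. (w i)^2) = 1 \<and> (\<Sum>i<n. u i * w i) = (0::real)"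
proof (cases "u 0 = 0 \<and> u 1 = 0")
  case True
  define w where "w = (\<lambda>i::nat. if i = 0 then 1 else 0::real)"
  have "(\<Sum>i<n. (w i)^2) = 1" using sum_01[OF n, of "\<lambda>i. (w i)^2"] by (simp add: w_def)
  moreover have "(\<Sum>i<n. u i * w i) = 0" using sum_01[OF n, of "\<lambda>i. u i * w i"] True by (simp add: w_def)
  moreover have "\<forall>i\<ge>n. w i = 0" using n by (simp add: w_def)
  ultimately show ?thesis by blast
next
  case False
  define m where "m = sqrt ((u 0)^2 + (u 1)^2)"
  have m2: "m^2 = (u 0)^2 + (u 1)^2" unfolding m_def by simp
  have mpos: "m > 0" using False unfolding m_def by (simp add: sum_power2_gt_zero_iff)
  define w where "w = (\<lambda>i::nat. if i = 0 then - u 1 / m else if i = 1 then u 0 / m else 0)"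
  have "(\<Sum>i<n. (w i)^2) = (u 1 / m)^2 + (u 0 / m)^2" using sum_01[OF n, of "\<lambda>i. (w i)^2"] by (simp add: w_def)
  also have "\<dots> = ((u 0)^2 + (u 1)^2) / m^2" by (simp add: power_divide add_divide_distrib)
  also have "\<dots> = 1" using m2 mpos by (metis less_irrefl power_not_zero divide_self)
  finally have "(\<Sum>i<n. (w i)^2) = 1" .
  moreover have "(\<Sum>i<n. u i * w i) = 0" using sum_01[OF n, of "\<lambda>i. u i * w i"] by (simp add: w_def field_simps)
  moreover have "\<forall>i\<ge>n. w i = 0" using n by (simp add: w_def)
  ultimately show ?thesis by blast
qed

lemma rot_path:
  assumes n: "2 \<le> n" and p: "p \<in> TS n" and q: "q \<in> TS n" and a0: "a0 \<in> TS n"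
    and P: "P = L2_set p {..<n}" "P > 0" and R: "R = L2_set q {..<n}" "R > 0"
  shows "\<exists>g. continuous_map (top_of_set {0..1}) (Euclidean_space n) g \<and> g 0 = (\<lambda>i. a0 i + p i)
     \<and> g 1 = (\<lambda>i. a0 i + q i) \<and> (\<forall>t\<in>{0..1}. edist n (g t) a0 = (1-t)*P + t*R)"
proof -
  define u where "u = (\<lambda>i. p i / P)"
  define v where "v = (\<lambda>i. q i / R)"
  have P2: "P^2 = (\<Sum>i<n. (p i)^2)" using P by (simp add: L2_set_def sum_nonneg)
  have R2: "R^2 = (\<Sum>i<n. (q i)^2)" using R by (simp add: L2_set_def sum_nonneg)
  have u1: "(\<Sum>i<n. (u i)^2) = 1"
    using P(2) by (simp add: u_def power_divide P2[symmetric] flip: sum_divide_distrib)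
  have v1: "(\<Sum>i<n. (v i)^2) = 1"
    using R(2) by (simp add: v_def power_divide R2[symmetric] flip: sum_divide_distrib)
  have uT: "\<forall>i\<ge>n. u i = 0" and vT: "\<forall>i\<ge>n. v i = 0"
    using p q by (auto simp: u_def v_def topspace_Euclidean_space)
  define c0 where "c0 = (\<Sum>i<n. u i * v i)"
  define d where "d = (\<lambda>i. 1 * v i + (- c0) * u i)"
  have d2: "(\<Sum>i<n. (d i)^2) = 1 - c0^2"
    unfolding d_def sum_sq_expand using u1 v1
    by (simp add: c0_def mult.commute power2_eq_square)
  have "0 \<le> (\<Sum>i<n. (d i)^2)" by (simp add: sum_nonneg)
  hence c0b: "c0^2 \<le> 1" using d2 by simp
  hence c0b': "-1 \<le> c0" "c0 \<le> 1" using abs_le_square_iff[of c0 1] by (auto simp: abs_le_iff)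
  define s where "s = sqrt (1 - c0^2)"
  have s0: "0 \<le> s" using c0b by (simp add: s_def)
  have s2: "s^2 = 1 - c0^2" using c0b by (simp add: s_def)
  obtain w where wT: "\<forall>i\<ge>n. w i = 0" and w1: "(\<Sum>i<n. (w i)^2) = 1" and uw: "(\<Sum>i<n. u i * w i) = 0"
    and vw: "\<forall>i. v i = c0 * u i + s * w i"
  proof (cases "s > 0")
    case True
    define w where "w = (\<lambda>i. d i / s)"
    have "(\<Sum>i<n. (w i)^2) = (\<Sum>i<n. (d i)^2) / s^2"
      by (simp add: w_def power_divide sum_divide_distrib)
    also have "\<dots> = s^2 / s^2" using d2 s2 by simp
    also have "\<dots> = 1" using True by simp
    finally have "(\<Sum>i<n. (w i)^2) = 1" .
    moreover have "(\<Sum>i<n. u i * w i) = 0"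
    proof -
      have "(\<Sum>i<n. u i * w i) = (\<Sum>i<n. u i * v i - c0 * (u i)^2) / s"
        by (simp add: w_def d_def algebra_simps power2_eq_square flip: sum_divide_distrib)
      also have "\<dots> = (c0 - c0 * 1) / s"
        by (simp add: sum_subtractf c0_def u1 flip: sum_distrib_left)
      finally show ?thesis by simp
    qed
    moreover have "\<forall>i. v i = c0 * u i + s * w i" using True by (simp add: w_def d_def)
    moreover have "\<forall>i\<ge>n. w i = 0" using uT vT by (simp add: w_def d_def)
    ultimately show ?thesis using that by blast
  next
    case False
    hence s00: "s = 0" using s0 by simp
    obtain w where "\<forall>i\<ge>n. w i = 0" "(\<Sum>i<n. (w i)^2) = 1" "(\<Sum>i<n. u i * w i) = 0"
      using perp_exists[OF n u1] by blast
    moreover have "\<forall>i. v i = c0 * u i + s * w i"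
    proof
      fix i
      have "(\<Sum>i<n. (d i)^2) = 0" using d2 s2 s00 by simp
      hence "\<forall>i\<in>{..<n}. (d i)^2 = 0" by (subst (asm) sum_nonneg_eq_0_iff) auto
      thus "v i = c0 * u i + s * w i"
        using uT vT s00 by (cases "i < n") (auto simp: d_def)
    qed
    ultimately show ?thesis using that by blast
  qed
  define \<alpha> where "\<alpha> = arccos c0"
  have ca: "cos \<alpha> = c0" using c0b' by (simp add: \<alpha>_def)
  have sa: "sin \<alpha> = s" using c0b' by (simp add: \<alpha>_def sin_arccos s_def)
  define g where "g = (\<lambda>t i. a0 i + ((1-t)*P + t*R) * (cos (t*\<alpha>) * u i + sin (t*\<alpha>) * w i))"
  have gT: "g t \<in> TS n" for t using a0 uT wT by (simp add: g_def topspace_Euclidean_space)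
  have "continuous_map (top_of_set {0..1}) (Euclidean_space n) g"
  proof (rule cont_path)
    show "continuous_on {0..1} (\<lambda>t. g t i)" for i unfolding g_def by (intro continuous_intros)
  qed (rule gT)
  moreover have "g 0 = (\<lambda>i. a0 i + p i)" using P by (simp add: g_def u_def)
  moreover have "g 1 = (\<lambda>i. a0 i + q i)"
  proof
    fix i
    have "g 1 i = a0 i + R * v i" using vw ca sa by (simp add: g_def)
    thus "g 1 i = a0 i + q i" using R by (simp add: v_def)
  qed
  moreover have "edist n (g t) a0 = (1-t)*P + t*R" if t: "t \<in> {0..1}" for t
  proof -
    have rho: "0 \<le> (1-t)*P + t*R" using t P R by auto
    have "edist n (g t) a0 = L2_set (\<lambda>i. ((1-t)*P + t*R) * (cos (t*\<alpha>) * u i + sin (t*\<alpha>) * w i)) {..<n}"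
      by (simp add: edist_def g_def)
    also have "\<dots> = ((1-t)*P + t*R) * L2_set (\<lambda>i. cos (t*\<alpha>) * u i + sin (t*\<alpha>) * w i) {..<n}"
      using rho by (simp add: L2_set_right_distrib)
    also have "L2_set (\<lambda>i. cos (t*\<alpha>) * u i + sin (t*\<alpha>) * w i) {..<n} = 1"
      unfolding L2_set_def sum_sq_expand u1 w1 uw by simp
    finally show ?thesis by simp
  qed
  ultimately show ?thesis by blast
qed


lemma ln_between:
  fixes d t tc :: real
  assumes "0 < d" "0 < tc" "min d tc \<le> t" "t \<le> max d tc"
  shows "\<bar>ln (t/d)\<bar> \<le> \<bar>ln (tc/d)\<bar>"
proof -
  have t0: "0 < t" using assms by (auto simp: min_def split: if_splits)
  have "ln (t/d) = ln t - ln d" "ln (tc/d) = ln tc - ln d" using assms t0 by (auto simp: ln_div)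
  moreover have "min (ln d) (ln tc) \<le> ln t" "ln t \<le> max (ln d) (ln tc)"
    using assms t0 by (auto simp: min_def max_def split: if_splits)
  ultimately show ?thesis by (auto simp: min_def max_def split: if_splits)
qed

lemma log_est:
  fixes d r s ta tb :: real
  assumes d: "0 < d" and dr: "d \<le> r" and s: "0 < s" and ta: "0 \<le> ta" and tb: "0 \<le> tb"
    and h1: "r \<le> d + ta" and h2: "ta \<le> d + r" and h3: "s \<le> ta + tb" and h4: "tb \<le> s + ta"
  shows "\<exists>tc. (tc = ta \<or> tc = tb) \<and> 0 < tc \<and> d * (1 + \<bar>ln (tc/d)\<bar>) \<le> 3 * (r * (1 + \<bar>ln (s/r)\<bar>))"
proof -
  have r: "0 < r" using d dr by linarith
  define X where "X = \<bar>ln (s/r)\<bar>"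
  have X0: "0 \<le> X" by (simp add: X_def)
  have l2: "0 < ln (2::real)" "ln (2::real) < 1" using ln_2_less_1 by auto
  have rX: "r \<le> r * (1 + X)" using r X0 by simp
  show ?thesis
  proof (cases "ta = 0")
    case True
    hence "r = d" "tb = s" using h1 dr h3 h4 by auto
    hence "d * (1 + \<bar>ln (tb/d)\<bar>) \<le> 3 * (r * (1 + X))" using r X0 by (simp add: X_def)
    thus ?thesis using s \<open>tb = s\<close> by (auto simp: X_def)
  next
    case False
    hence ta0: "0 < ta" using ta by simp
    show ?thesis
    proof (cases "d/2 \<le> ta")
      case True
      have L: "\<bar>ln (ta/d)\<bar> \<le> ln 2 + (r/d - 1)"
      proof (cases "d \<le> ta")
        case True
        have "ln (ta/d) \<le> ln (2*r/d)" using ta0 d h2 dr by (simp add: divide_right_mono)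
        also have "\<dots> = ln (2 * (r/d))" by simp
        also have "\<dots> = ln 2 + ln (r/d)" using r d by (simp add: ln_div ln_mult)
        also have "ln (r/d) \<le> r/d - 1" using r d by (intro ln_le_minus_one) simp
        finally have "ln (ta/d) \<le> ln 2 + (r/d - 1)" by simp
        moreover have "0 \<le> ln (ta/d)" using True d by simp
        ultimately show ?thesis by simp
      next
        case False
        have "\<bar>ln (ta/d)\<bar> = ln (d/ta)" using False ta0 d by (simp add: ln_div)
        also have "\<dots> \<le> ln 2" using \<open>d/2 \<le> ta\<close> ta0 d by (simp add: divide_le_eq mult.commute)
        also have "\<dots> \<le> ln 2 + (r/d - 1)" using dr d by simp
        finally show ?thesis .
      qed
      have "d * (1 + \<bar>ln (ta/d)\<bar>) \<le> d * (1 + (ln 2 + (r/d - 1)))"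
        using L d by (intro mult_left_mono) auto
      also have "\<dots> = d * ln 2 + r" using d by (simp add: algebra_simps)
      also have "\<dots> \<le> 3 * (r * (1 + X))"
      proof -
        have "d * ln 2 \<le> d * 1" using d l2 by (intro mult_left_mono) auto
        thus ?thesis using dr rX r by linarith
      qed
      finally show ?thesis using ta0 by (auto simp: X_def)
    next
      case False
      hence ta2: "ta < d/2" by simp
      show ?thesis
      proof (cases "2*ta \<le> s")
        case True
        have tb0: "0 < tb" "s/2 \<le> tb" "tb \<le> 3/2 * s" using True h3 h4 ta0 by auto
        have r32: "r \<le> 3/2 * d" using h1 ta2 by simp
        have e: "ln (tb/d) = ln (tb/s) + ln (s/r) + ln (r/d)"
          using tb0 s r d by (simp add: ln_div)
        have "ln (tb/s) \<le> ln (3/2)" using tb0 s by (simp add: pos_divide_le_eq)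
        also have "\<dots> \<le> ln 2" by simp
        finally have a1: "ln (tb/s) \<le> ln 2" .
        have "ln (1/2) \<le> ln (tb/s)" using tb0 s by (simp add: le_divide_eq)
        hence a2: "- ln 2 \<le> ln (tb/s)" by (simp add: ln_div)
        have "ln (r/d) \<le> ln (3/2)" using r32 d r by (simp add: pos_divide_le_eq)
        also have "\<dots> \<le> ln 2" by simp
        finally have a3: "ln (r/d) \<le> ln 2" .
        have a4: "0 \<le> ln (r/d)" using dr d by simp
        have L: "\<bar>ln (tb/d)\<bar> \<le> 2 + X"
          using e a1 a2 a3 a4 l2 unfolding X_def by linarith
        have "d * (1 + \<bar>ln (tb/d)\<bar>) \<le> d * (3 + X)" using L d by (intro mult_left_mono) auto
        also have "\<dots> \<le> r * (3 + X)" using dr X0 by (intro mult_right_mono) auto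
        also have "\<dots> \<le> 3 * (r * (1 + X))" using r X0 by (simp add: algebra_simps)
        finally show ?thesis using tb0 by (auto simp: X_def)
      next
        case False
        have sd: "s < d" using False ta2 by simp
        have "\<bar>ln (ta/d)\<bar> = ln d - ln ta" using ta0 ta2 d by (simp add: ln_div)
        moreover have "ln s < ln (2 * ta)" using False s ta0 by simp
        moreover have "ln (2 * ta) = ln 2 + ln ta" using ta0 by (simp add: ln_mult)
        moreover have "ln d \<le> ln r" using dr d by simp
        moreover have "X = ln r - ln s" using sd dr s r unfolding X_def by (simp add: ln_div)
        ultimately have L: "\<bar>ln (ta/d)\<bar> \<le> 1 + X" using l2 by linarith
        have "d * (1 + \<bar>ln (ta/d)\<bar>) \<le> d * (2 + X)" using L d by (intro mult_left_mono) auto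
        also have "\<dots> \<le> r * (2 + X)" using dr X0 by (intro mult_right_mono) auto
        also have "\<dots> \<le> 3 * (r * (1 + X))" using r X0 by (simp add: algebra_simps)
        finally show ?thesis using ta0 by (auto simp: X_def)
      qed
    qed
  qed
qed


lemma convex_between:
  fixes x y t :: real
  assumes "0 \<le> t" "t \<le> 1"
  shows "min x y \<le> (1-t)*x + t*y" "(1-t)*x + t*y \<le> max x y"
proof -
  have e: "(1-t)*x + t*y = x + t*(y - x)" by (simp add: algebra_simps)
  have "min x y \<le> (1-t)*x + t*y \<and> (1-t)*x + t*y \<le> max x y"
  proof (cases "x \<le> y")
    case True
    have "t*(y-x) \<le> 1*(y-x)" using True assms by (intro mult_right_mono) auto
    moreover have "0 \<le> t*(y-x)" using True assms by simp
    ultimately show "min x y \<le> (1-t)*x + t*y \<and> (1-t)*x + t*y \<le> max x y"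
      using e True by (auto simp: min_def max_def)
  next
    case False
    have "1*(y-x) \<le> t*(y-x)" using False assms by (intro mult_right_mono_neg) auto
    moreover have "t*(y-x) \<le> 0" using False assms by (simp add: mult_nonneg_nonpos)
    moreover have "min x y = y" "max x y = x" using False by auto
    ultimately show "min x y \<le> (1-t)*x + t*y \<and> (1-t)*x + t*y \<le> max x y"
      using e by (smt (verit))
  qed
  thus "min x y \<le> (1-t)*x + t*y" "(1-t)*x + t*y \<le> max x y" by auto
qed

lemma rad_hit:
  assumes n: "2 \<le> n" and z: "z \<in> D" "z \<in> TS n" and a0: "a0 \<in> TS n" and d: "0 < edist n z a0"
    and c: "c \<in> TS n" "c \<notin> D" "c \<noteq> a0"
  shows "\<exists>b'\<in>Euclidean_space n frontier_of D. min (edist n z a0) (edist n c a0) \<le> edist n b' a0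
            \<and> edist n b' a0 \<le> max (edist n z a0) (edist n c a0)"
proof -
  define p where "p = (\<lambda>i. z i - a0 i)"
  define q where "q = (\<lambda>i. c i - a0 i)"
  have pT: "p \<in> TS n" "q \<in> TS n" using z a0 c by (auto simp: p_def q_def topspace_Euclidean_space)
  have R: "0 < edist n c a0" using edist_pos c a0 by blast
  have "edist n z a0 = L2_set p {..<n}" "edist n c a0 = L2_set q {..<n}"
    by (simp_all add: edist_def p_def q_def)
  from rot_path[OF n pT a0 this(1) d this(2) R] obtain g where
    g: "continuous_map (top_of_set {0..1}) (Euclidean_space n) g" "g 0 = (\<lambda>i. a0 i + p i)"
       "g 1 = (\<lambda>i. a0 i + q i)" "\<forall>t\<in>{0..1}. edist n (g t) a0 = (1-t)*edist n z a0 + t*edist n c a0"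
    by blast
  have "g 0 = z" "g 1 = c" using g(2,3) by (auto simp: p_def q_def)
  then obtain t where t: "t \<in> {0..1}" "g t \<in> Euclidean_space n frontier_of D"
    using path_hits[OF g(1)] z c by metis
  have "edist n (g t) a0 = (1-t)*edist n z a0 + t*edist n c a0" using g(4) t(1) by blast
  thus ?thesis using t convex_between[of t "edist n z a0" "edist n c a0"] by (intro bexI[of _ "g t"]) auto
qed

lemma pointwise:
  assumes n: "2 \<le> n" and dom: "domain_in n D" and a1: "a1 \<in> compl n D" and b1: "b1 \<in> compl n D"
    and ab1: "a1 \<noteq> b1" and z: "z \<in> D"
  shows "0 \<le> lam'' n D z \<and> lam'' n D z \<le> lam' n D z \<and> lam' n D z \<le> lam n D z \<and> lam n D z \<le> 3 * lam'' n D z"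
proof -
  have openD: "openin (Euclidean_space n) D" using dom by (simp add: domain_in_def)
  have DT: "D \<subseteq> TS n" using openin_subset[OF openD] .
  have zT: "z \<in> TS n" using z DT by blast
  define bd where "bd = bdry n D"
  have bd_def': "bd = Euclidean_space n frontier_of D" by (simp add: bd_def bdry_def)
  have bdD: "x \<notin> D" if "x \<in> bd" for x
    using that frontier_of_openin[OF openD] by (simp add: bd_def')
  have bdT: "bd \<subseteq> TS n" using frontier_of_subset_topspace by (simp add: bd_def')
  have bdc: "bd \<subseteq> compl n D" using bdD bdT by (auto simp: compl_def)
  have bdcl: "closedin (Euclidean_space n) bd" by (simp add: bd_def' closedin_frontier_of)
  have cT: "x \<in> TS n" "x \<notin> D" if "x \<in> compl n D" for x using that by (auto simp: compl_def)
  obtain q0 where q0: "q0 \<in> bd" using seg_hits[OF z zT cT[OF a1]] by (auto simp: bd_def')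
  obtain a0 where a0: "a0 \<in> bd" and a0min: "\<forall>b\<in>bd. edist n z a0 \<le> edist n z b"
    using nearest[OF bdcl q0 zT] by blast
  define d where "d = edist n z a0"
  have a0T: "a0 \<in> TS n" using a0 bdT by blast
  have sd: "setdist_pt n z bd = d"
    unfolding setdist_pt_def d_def by (rule cInf_eq_minimum) (use a0 a0min in auto)
  have d0: "0 < d" unfolding d_def using edist_pos[OF zT a0T] z bdD[OF a0] by metis
  have far: "d \<le> edist n z x" if xc: "x \<in> compl n D" for x
  proof -
    obtain q where "q \<in> bd" "edist n z q \<le> edist n z x"
      using seg_hits[OF z zT cT[OF xc]] by (auto simp: bd_def')
    thus ?thesis using a0min unfolding d_def by force
  qed
  define Sc where "Sc = {Qf n z a b | a b. a \<in> compl n D \<and> b \<in> compl n D \<and> a \<noteq> b}"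
  define Sb where "Sb = {Qf n z a b | a b. a \<in> bdry n D \<and> b \<in> bdry n D \<and> a \<noteq> b}"
  define S2 where "S2 = {Qf n z a b | a b. a \<in> bdry n D \<and> b \<in> bdry n D \<and> a \<noteq> b
                                        \<and> edist n z a = setdist_pt n z (bdry n D)}"
  have lamc: "lam n D z = 1 / Inf Sc" by (simp add: lam_def Sc_def)
  have lamb: "lam' n D z = 1 / Inf Sb" by (simp add: lam'_def Sb_def)
  have lam2: "lam'' n D z = 1 / Inf S2" by (simp add: lam''_def S2_def)
  have Qge: "edist n z a \<le> Qf n z a b" for a b
  proof -
    have "edist n z a * 1 \<le> edist n z a * (1 + \<bar>ln (edist n a b / edist n z a)\<bar>)"
      by (intro mult_left_mono) auto
    thus ?thesis by (simp add: Qf_def)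
  qed
  have Sclow: "d \<le> y" if "y \<in> Sc" for y
    using that far Qge unfolding Sc_def by (smt (verit) mem_Collect_eq)
  have SbSc: "Sb \<subseteq> Sc" using bdc unfolding Sb_def Sc_def bd_def by blast
  have S2Sb: "S2 \<subseteq> Sb" unfolding Sb_def S2_def by blast
  have key: "\<exists>y\<in>S2. y \<le> 3 * Qf n z a b" if a: "a \<in> compl n D" and b: "b \<in> compl n D" and ab: "a \<noteq> b" for a b
  proof -
    define r where "r = edist n z a"
    define s where "s = edist n a b"
    define ta where "ta = edist n a a0"
    define tb where "tb = edist n b a0"
    have aT: "a \<in> TS n" and bT: "b \<in> TS n" using a b by (auto simp: compl_def)
    have "d \<le> r" using far[OF a] by (simp add: r_def)
    moreover have "0 < s" using edist_pos[OF aT bT ab] by (simp add: s_def)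
    moreover have "r \<le> d + ta" using edist_triangle[of n z a a0] edist_sym[of n a0 a]
      by (simp add: r_def d_def ta_def)
    moreover have "ta \<le> d + r" using edist_triangle[of n a a0 z] edist_sym[of n a z]
      by (simp add: r_def d_def ta_def)
    moreover have "s \<le> ta + tb" using edist_triangle[of n a b a0] edist_sym[of n a0 b]
      by (simp add: s_def ta_def tb_def)
    moreover have "tb \<le> s + ta" using edist_triangle[of n b a0 a] edist_sym[of n b a]
      by (simp add: s_def ta_def tb_def)
    ultimately obtain tc where tc: "tc = ta \<or> tc = tb" "0 < tc"
      "d * (1 + \<bar>ln (tc/d)\<bar>) \<le> 3 * (r * (1 + \<bar>ln (s/r)\<bar>))"
      using log_est[OF d0] by (metis edist_nonneg ta_def tb_def)
    obtain c where c: "c \<in> compl n D" "tc = edist n c a0"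
      using tc(1) a b unfolding ta_def tb_def by blast
    have cne: "c \<noteq> a0" using c tc(2) by auto
    obtain b' where b': "b' \<in> bd" "min d tc \<le> edist n b' a0" "edist n b' a0 \<le> max d tc"
      using rad_hit[OF n z zT a0T _ cT[OF c(1)] cne] d0 c(2) unfolding d_def bd_def' by auto
    have "0 < edist n b' a0" using b'(2) d0 tc(2) by linarith
    hence b'ne: "a0 \<noteq> b'" by auto
    define y where "y = Qf n z a0 b'"
    have "y = d * (1 + \<bar>ln (edist n b' a0 / d)\<bar>)"
      by (simp add: y_def Qf_def d_def edist_sym[of n a0 b'])
    also have "\<dots> \<le> d * (1 + \<bar>ln (tc / d)\<bar>)"
      using ln_between[OF d0 tc(2) b'(2,3)] d0 by (intro mult_left_mono) auto
    also have "\<dots> \<le> 3 * Qf n z a b" using tc(3) by (simp add: Qf_def r_def s_def)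
    finally have "y \<le> 3 * Qf n z a b" .
    moreover have "y \<in> S2" unfolding S2_def y_def
      using a0 b'(1) b'ne sd unfolding bd_def d_def by (intro CollectI exI[of _ a0] exI[of _ b']) auto
    ultimately show ?thesis by blast
  qed
  have S2ne: "S2 \<noteq> {}" using key[OF a1 b1 ab1] by blast
  have Sbne: "Sb \<noteq> {}" using S2ne S2Sb by blast
  have Scne: "Sc \<noteq> {}" unfolding Sc_def using a1 b1 ab1 by blast
  have bddc: "bdd_below Sc" using Sclow by (auto simp: bdd_below_def)
  have bddb: "bdd_below Sb" using bddc SbSc by (meson bdd_below_mono)
  have bdd2: "bdd_below S2" using bddb S2Sb by (meson bdd_below_mono)
  have Ic: "d \<le> Inf Sc" using Scne Sclow by (intro cInf_greatest) auto
  have Icb: "Inf Sc \<le> Inf Sb" by (rule cInf_superset_mono[OF Sbne bddc SbSc])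
  have Ib2: "Inf Sb \<le> Inf S2" by (rule cInf_superset_mono[OF S2ne bddb S2Sb])
  have I2c: "Inf S2 / 3 \<le> Inf Sc"
  proof (rule cInf_greatest[OF Scne])
    fix x assume "x \<in> Sc"
    then obtain a b where "a \<in> compl n D" "b \<in> compl n D" "a \<noteq> b" "x = Qf n z a b"
      unfolding Sc_def by blast
    then obtain y where "y \<in> S2" "y \<le> 3 * x" using key by blast
    moreover have "Inf S2 \<le> y" using cInf_lower[OF \<open>y \<in> S2\<close> bdd2] .
    ultimately show "Inf S2 / 3 \<le> x" by linarith
  qed
  have pc: "0 < Inf Sc" using Ic d0 by linarith
  have pb: "0 < Inf Sb" using pc Icb by linarith
  have p2: "0 < Inf S2" using pb Ib2 by linarith
  have "0 \<le> lam'' n D z" using p2 lam2 by simp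
  moreover have "lam'' n D z \<le> lam' n D z" unfolding lam2 lamb
    using pb Ib2 by (intro divide_left_mono) auto
  moreover have "lam' n D z \<le> lam n D z" unfolding lamb lamc
    using pc Icb by (intro divide_left_mono) auto
  moreover have "lam n D z \<le> 3 * lam'' n D z" unfolding lamc lam2
  proof -
    have "1 / Inf Sc \<le> 1 / (Inf S2 / 3)" using I2c p2 by (intro divide_left_mono) auto
    thus "1 / Inf Sc \<le> 3 * (1 / Inf S2)" by simp
  qed
  ultimately show ?thesis by blast
qed


lemma nn_cmult_le:
  fixes c :: real
  assumes c: "0 < c"
  shows "(\<integral>\<^sup>+x. ennreal c * f x \<partial>M) \<le> ennreal c * integral\<^sup>N M f"
  unfolding nn_integral_def
proof (rule SUP_least)
  fix g assume "g \<in> {g. simple_function M g \<and> g \<le> (\<lambda>x. ennreal c * f x)}"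
  hence sg: "simple_function M g" and gle: "\<And>x. g x \<le> ennreal c * f x" by (auto simp: le_fun_def)
  define h where "h = (\<lambda>x. g x * ennreal (1/c))"
  have cc: "ennreal c * ennreal (1/c) = 1" using c by (simp flip: ennreal_mult)
  have sh: "simple_function M h" unfolding h_def using sg by (rule simple_function_compose1)
  have hle: "h \<le> f"
  proof (rule le_funI)
    fix x
    have "h x \<le> ennreal c * f x * ennreal (1/c)" unfolding h_def by (intro mult_right_mono gle) simp
    also have "\<dots> = f x * (ennreal c * ennreal (1/c))" by (simp add: ac_simps)
    finally show "h x \<le> f x" using cc by simp
  qed
  have "g = (\<lambda>x. ennreal c * h x)"
  proof
    fix x show "g x = ennreal c * h x" unfolding h_def
      by (metis cc mult.assoc mult.commute mult.right_neutral)
  qed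
  hence "integral\<^sup>S M g = ennreal c * integral\<^sup>S M h" using sh by simp
  also have "\<dots> \<le> ennreal c * (SUP g \<in> {g. simple_function M g \<and> g \<le> f}. integral\<^sup>S M g)"
    using sh hle by (intro mult_left_mono SUP_upper) auto
  finally show "integral\<^sup>S M g \<le> ennreal c * (SUP g \<in> {g. simple_function M g \<and> g \<le> f}. integral\<^sup>S M g)" .
qed

lemma line_int_mono:
  assumes "\<forall>t\<in>{0..1}. \<rho>1 (g t) \<le> \<rho>2 (g t)"
  shows "line_int n \<rho>1 g \<le> line_int n \<rho>2 g"
  unfolding line_int_def
  by (rule nn_integral_mono) (use assms in \<open>auto simp: indicator_def ennreal_leI\<close>)

lemma line_int_scale:
  assumes "\<forall>t\<in>{0..1}. \<rho>1 (g t) \<le> 3 * \<rho>2 (g t) \<and> 0 \<le> \<rho>2 (g t)"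
  shows "line_int n \<rho>1 g \<le> ennreal 3 * line_int n \<rho>2 g"
proof -
  have "line_int n \<rho>1 g \<le> (\<integral>\<^sup>+ t. ennreal 3 * (ennreal (\<rho>2 (g t)) * indicator {0..1} t) \<partial>interval_measure (arclen n g))"
    unfolding line_int_def
  proof (rule nn_integral_mono)
    fix t
    show "ennreal (\<rho>1 (g t)) * indicator {0..1} t \<le> ennreal 3 * (ennreal (\<rho>2 (g t)) * indicator {0..1} t)"
    proof (cases "t \<in> {0..1}")
      case True
      hence "ennreal (\<rho>1 (g t)) \<le> ennreal (3 * \<rho>2 (g t))" using assms by (intro ennreal_leI) auto
      also have "\<dots> = ennreal 3 * ennreal (\<rho>2 (g t))" using assms True by (simp add: ennreal_mult)
      finally show ?thesis using True by simp
    qed simp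
  qed
  also have "\<dots> \<le> ennreal 3 * line_int n \<rho>2 g" unfolding line_int_def by (rule nn_cmult_le) simp
  finally show ?thesis .
qed

lemma dist_mono:
  assumes "\<forall>g\<in>joins n D z w. line_int n \<rho>1 g \<le> line_int n \<rho>2 g"
  shows "dist_rho n D \<rho>1 z w \<le> dist_rho n D \<rho>2 z w"
  unfolding dist_rho_def using assms by (intro INF_mono) blast

lemma dist_scale:
  assumes "\<forall>g\<in>joins n D z w. line_int n \<rho>1 g \<le> ennreal 3 * line_int n \<rho>2 g"
  shows "dist_rho n D \<rho>1 z w \<le> ennreal 3 * dist_rho n D \<rho>2 z w"
proof -
  define k where "k = ennreal (1/3)"
  have "ennreal 3 * ennreal (1/3) = ennreal (3 * (1/3))" by (rule ennreal_mult[symmetric]) auto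
  hence k3: "ennreal 3 * k = 1" by (simp add: k_def)
  have "k * dist_rho n D \<rho>1 z w \<le> dist_rho n D \<rho>2 z w"
    unfolding dist_rho_def
  proof (rule INF_greatest)
    fix g assume g: "g \<in> joins n D z w"
    have "k * (INF g\<in>joins n D z w. line_int n \<rho>1 g) \<le> k * line_int n \<rho>1 g"
      using g by (intro mult_left_mono INF_lower) auto
    also have "\<dots> \<le> k * (ennreal 3 * line_int n \<rho>2 g)" using assms g by (intro mult_left_mono) auto
    also have "\<dots> = line_int n \<rho>2 g" using k3 by (simp add: mult.assoc[symmetric] mult.commute[of k])
    finally show "k * (INF g\<in>joins n D z w. line_int n \<rho>1 g) \<le> line_int n \<rho>2 g" .
  qed
  hence "ennreal 3 * (k * dist_rho n D \<rho>1 z w) \<le> ennreal 3 * dist_rho n D \<rho>2 z w"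
    by (rule mult_left_mono) simp
  thus ?thesis using k3 by (simp add: mult.assoc[symmetric])
qed

theorem lemma6:
  shows "\<exists>C0>0. \<forall>n\<ge>2. \<forall>D. domain_in n D \<and> (\<exists>a b. a \<in> compl n D \<and> b \<in> compl n D \<and> a \<noteq> b) \<longrightarrow>
     (\<forall>z\<in>D. \<forall>w\<in>D.
        dist_rho n D (lam'' n D) z w \<le> dist_rho n D (lam' n D) z w \<and>
        dist_rho n D (lam' n D) z w \<le> dist_rho n D (lam n D) z w \<and>
        dist_rho n D (lam n D) z w \<le> ennreal C0 * dist_rho n D (lam'' n D) z w)"
proof (intro exI[of _ "3::real"] conjI allI impI ballI)
  fix n :: nat and D z w
  assume n: "2 \<le> n" and H: "domain_in n D \<and> (\<exists>a b. a \<in> compl n D \<and> b \<in> compl n D \<and> a \<noteq> b)"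
  then obtain a b where ab: "a \<in> compl n D" "b \<in> compl n D" "a \<noteq> b" by blast
  have P: "0 \<le> lam'' n D x \<and> lam'' n D x \<le> lam' n D x \<and> lam' n D x \<le> lam n D x \<and> lam n D x \<le> 3 * lam'' n D x"
    if "x \<in> D" for x using pointwise[OF n conjunct1[OF H] ab that] .
  have J: "\<forall>t\<in>{0..1}. g t \<in> D" if "g \<in> joins n D z w" for g
    using that by (auto simp: joins_def)
  show "dist_rho n D (lam'' n D) z w \<le> dist_rho n D (lam' n D) z w"
    using J P by (intro dist_mono ballI line_int_mono) blast
  show "dist_rho n D (lam' n D) z w \<le> dist_rho n D (lam n D) z w"
    using J P by (intro dist_mono ballI line_int_mono) blast
  show "dist_rho n D (lam n D) z w \<le> ennreal 3 * dist_rho n D (lam'' n D) z w"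
    using J P by (intro dist_scale ballI line_int_scale) blast
qed simp

end
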